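(* Let $d\geq 2$ and $0<a<b\leq d$ be integers, and let $\ell_d^{(a,b)}(\alpha,\lambda,n)$ be the number of partitions with perimeter $n$, largest part $\alpha$, exactly $\lambda$ parts, and all parts congruent to $a$ or $b$ modulo $d$. Then, as formal power series, $$\sum_{\alpha,\lambda,n\geq1}\ell_d^{(a,b)}(\alpha,\lambda,n)x^\alpha y^\lambda q^n=\frac{y\,(x^aq^a-x^ayq^{a+1}+x^bq^b)}{1-2yq+y^2q^2-x^dq^d},$$ and in particular $$\sum_{n\geq 1}\ell_d^{(a,b)}(n)q^n=\frac{q^a-q^{a+1}+q^b}{1-2q+q^2-q^d}.$$
   Context: A partition is a finite nonincreasing sequence of positive integers (its parts); its size is not fixed. The perimeter of a partition with largest part $\alpha$ and $\lambda$ parts is $\alpha+\lambda-1$. For $0<a<b\le d$, $\ell_d^{(a,b)}(n)$ is the number of partitions of perimeter $n$ all of whose parts are congruent to $a$ or $b$ modulo $d$. *)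

theory Defs
  imports "HOL-Computational_Algebra.Formal_Power_Series" "HOL-Number_Theory.Cong"
begin

definition is_partition :: "nat list \<Rightarrow> bool" where
  "is_partition p \<longleftrightarrow> p \<noteq> [] \<and> sorted_wrt (\<ge>) p \<and> (\<forall>k\<in>set p. 0 < k)"

definition largest_part :: "nat list \<Rightarrow> nat" where
  "largest_part p = hd p"

definition num_parts :: "nat list \<Rightarrow> nat" where
  "num_parts p = length p"

definition perimeter :: "nat list \<Rightarrow> nat" where
  "perimeter p = largest_part p + num_parts p - 1"

definition parts_ab_mod :: "nat \<Rightarrow> nat \<Rightarrow> nat \<Rightarrow> nat list \<Rightarrow> bool" where
  "parts_ab_mod d a b p \<longleftrightarrow> (\<forall>k\<in>set p. [k = a] (mod d) \<or> [k = b] (mod d))"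

definition ell3 :: "nat \<Rightarrow> nat \<Rightarrow> nat \<Rightarrow> nat \<Rightarrow> nat \<Rightarrow> nat \<Rightarrow> nat" where
  "ell3 d a b al la n = card {p. is_partition p \<and> parts_ab_mod d a b p \<and>
      largest_part p = al \<and> num_parts p = la \<and> perimeter p = n}"

definition ell :: "nat \<Rightarrow> nat \<Rightarrow> nat \<Rightarrow> nat \<Rightarrow> nat" where
  "ell d a b n = card {p. is_partition p \<and> parts_ab_mod d a b p \<and> perimeter p = n}"

text \<open>Trivariate formal power series in x, y, q: type real fps fps fps,
 outermost variable q, middle y, innermost x.\<close>
definition fq :: "real fps fps fps" where "fq = fps_X"
definition fy :: "real fps fps fps" where "fy = fps_const fps_X"
definition fx :: "real fps fps fps" where "fx = fps_const (fps_const fps_X)"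

definition trivar :: "(nat \<Rightarrow> nat \<Rightarrow> nat \<Rightarrow> real) \<Rightarrow> real fps fps fps" where
  "trivar c = Abs_fps (\<lambda>n. Abs_fps (\<lambda>la. Abs_fps (\<lambda>al.
      if 1 \<le> al \<and> 1 \<le> la \<and> 1 \<le> n then c al la n else 0)))"

end

theory Submission
  imports Defs "HOL-Library.Multiset"
begin

unbundle fps_syntax


definition SS :: "nat \<Rightarrow> nat \<Rightarrow> nat \<Rightarrow> nat set" where
  "SS d a b = {k. 0 < k \<and> ([k = a] (mod d) \<or> [k = b] (mod d))}"

definition AA :: "nat \<Rightarrow> nat \<Rightarrow> nat \<Rightarrow> nat \<Rightarrow> nat set" where
  "AA d a b m = {k \<in> SS d a b. k \<le> m}"

lemma finite_AA[simp]: "finite (AA d a b m)"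
  unfolding AA_def by auto

lemma card_sorted_lists:
  assumes "finite A"
  shows "card {q::nat list. sorted_wrt (\<ge>) q \<and> length q = k \<and> set q \<subseteq> A} = (card A + k - 1) choose k"
proof -
  let ?L = "{q::nat list. sorted_wrt (\<ge>) q \<and> length q = k \<and> set q \<subseteq> A}"
  have inj: "inj_on mset ?L"
  proof (rule inj_onI)
    fix x y assume x: "x \<in> ?L" and y: "y \<in> ?L" and e: "mset x = mset y"
    have "sorted (rev x)" "sorted (rev y)" using x y by (auto simp: sorted_wrt_rev)
    moreover have "mset (rev x) = mset (rev y)" using e by simp
    ultimately have "rev x = rev y" by (metis properties_for_sort)
    thus "x = y" by simp
  qed
  have img: "mset ` ?L = multisets_of_size A k"
  proof
    show "mset ` ?L \<subseteq> multisets_of_size A k"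
      by (auto simp: multisets_of_size_def)
    show "multisets_of_size A k \<subseteq> mset ` ?L"
    proof
      fix M assume M: "M \<in> multisets_of_size A k"
      let ?q = "rev (sorted_list_of_multiset M)"
      have "length (sorted_list_of_multiset M) = size M"
        by (metis size_mset mset_sorted_list_of_multiset)
      then have "?q \<in> ?L" using M
        by (simp add: multisets_of_size_def sorted_wrt_rev)
      moreover have "mset ?q = M" by simp
      ultimately show "M \<in> mset ` ?L" by (metis image_eqI)
    qed
  qed
  have "card ?L = card (mset ` ?L)" using inj by (simp add: card_image)
  also have "\<dots> = (card A + k - 1) choose k" using img card_multisets_of_size[OF assms] by simp
  finally show ?thesis .
qed


lemma ell3_l0: "ell3 d a b m 0 n = 0"
  unfolding ell3_def num_parts_def is_partition_def by simp

lemma ell3_formula: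
  assumes l: "0 < l"
  shows "ell3 d a b m l n = (if n + 1 = m + l \<and> m \<in> SS d a b
            then (card (AA d a b m) + (l - 1) - 1) choose (l - 1) else 0)"
proof -
  let ?P = "{p. is_partition p \<and> parts_ab_mod d a b p \<and>
      largest_part p = m \<and> num_parts p = l \<and> perimeter p = n}"
  let ?L = "{q::nat list. sorted_wrt (\<ge>) q \<and> length q = l - 1 \<and> set q \<subseteq> AA d a b m}"
  show ?thesis
  proof (cases "n + 1 = m + l \<and> m \<in> SS d a b")
    case True
    have "?P = (Cons m) ` ?L"
    proof
      show "?P \<subseteq> (Cons m) ` ?L"
      proof
        fix p assume p: "p \<in> ?P"
        then have ne: "p \<noteq> []" by (simp add: is_partition_def)
        moreover have "hd p = m" using p by (simp add: largest_part_def)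
        ultimately have pe: "p = m # tl p" by (metis list.collapse)
        have "tl p \<in> ?L"
        proof -
          have s0: "sorted_wrt (\<ge>) p" "\<forall>k\<in>set p. 0 < k"
            "\<forall>k\<in>set p. [k = a] (mod d) \<or> [k = b] (mod d)"
            using p unfolding is_partition_def parts_ab_mod_def by auto
          have s: "sorted_wrt (\<ge>) (m # tl p)" "\<forall>k\<in>set (m # tl p). 0 < k"
            "\<forall>k\<in>set (m # tl p). [k = a] (mod d) \<or> [k = b] (mod d)"
            using s0 pe by metis+
          have "length p = l" using p by (simp add: num_parts_def)
          then have "length (tl p) = l - 1" by simp
          moreover have "set (tl p) \<subseteq> AA d a b m" using s by (auto simp: AA_def SS_def)
          ultimately show ?thesis using s by simp
        qed
        then show "p \<in> (Cons m) ` ?L" using pe by (metis image_eqI)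
      qed
      show "(Cons m) ` ?L \<subseteq> ?P"
      proof
        fix p assume "p \<in> (Cons m) ` ?L"
        then obtain q where q: "q \<in> ?L" and pq: "p = m # q" by auto
        have "m \<in> SS d a b" using True by simp
        then show "p \<in> ?P" using q pq True l
          by (auto simp: is_partition_def parts_ab_mod_def AA_def SS_def largest_part_def
               num_parts_def perimeter_def)
      qed
    qed
    then have "card ?P = card ?L" by (simp add: card_image)
    also have "\<dots> = (card (AA d a b m) + (l - 1) - 1) choose (l - 1)"
      by (rule card_sorted_lists) simp
    finally show ?thesis using True unfolding ell3_def by simp
  next
    case False
    have "?P = {}"
    proof (rule ccontr)
      assume "?P \<noteq> {}"
      then obtain p where p: "p \<in> ?P" by blast
      then have ne: "p \<noteq> []" by (simp add: is_partition_def)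
      moreover have "hd p = m" using p by (simp add: largest_part_def)
        ultimately have pe: "p = m # tl p" by (metis list.collapse)
      have mi: "m \<in> set p" using ne \<open>hd p = m\<close> hd_in_set by blast
      have ip: "is_partition p" "parts_ab_mod d a b p" using p by auto
      have m0: "0 < m" using mi ip(1) unfolding is_partition_def by blast
      have "m \<in> SS d a b" using mi ip m0 unfolding SS_def parts_ab_mod_def by blast
      moreover have "n + 1 = m + l"
      proof -
        have "perimeter p = n" "length p = l" using p by (auto simp: num_parts_def)
        then show ?thesis using m0 \<open>hd p = m\<close> by (simp add: perimeter_def largest_part_def num_parts_def)
      qed
      ultimately show False using False by simp
    qed
    then have c0: "card ?P = 0" by (simp only: card.empty)
    show ?thesis unfolding ell3_def if_not_P[OF False] by (rule c0)
  qed
qed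


context
  fixes d a b :: nat
  assumes d2: "2 \<le> d" and a0: "0 < a" and ab: "a < b" and bd: "b \<le> d"
begin

lemma SS_small: "0 < k \<Longrightarrow> k \<le> d \<Longrightarrow> k \<in> SS d a b \<longleftrightarrow> k = a \<or> k = b"
proof -
  assume k: "0 < k" "k \<le> d"
  have am: "a mod d = a" using ab bd by simp
  have bm: "b mod d = (if b = d then 0 else b)" using bd by auto
  have km: "k mod d = (if k = d then 0 else k)" using k by auto
  show ?thesis unfolding SS_def cong_def using k am bm km a0 ab bd
    by (auto split: if_splits)
qed

lemma SS_shift: "d < k \<Longrightarrow> k \<in> SS d a b \<longleftrightarrow> k - d \<in> SS d a b"
proof -
  assume k: "d < k"
  have "k mod d = (k - d) mod d" using k by (simp add: le_mod_geq)
  then show ?thesis unfolding SS_def cong_def using k by auto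
qed

lemma a_SS: "a \<in> SS d a b" and b_SS: "b \<in> SS d a b"
  using SS_small[of a] SS_small[of b] a0 ab bd by auto

lemma SS_pos: "x \<in> SS d a b \<Longrightarrow> 0 < x" by (simp add: SS_def)

lemma AA_a: "AA d a b a = {a}"
proof (rule set_eqI)
  fix x
  show "x \<in> AA d a b a \<longleftrightarrow> x \<in> {a}"
  proof
    assume x: "x \<in> AA d a b a"
    then have "x \<in> SS d a b" "x \<le> a" by (auto simp: AA_def)
    moreover have "0 < x" using \<open>x \<in> SS d a b\<close> by (rule SS_pos)
    ultimately have "x = a \<or> x = b" using SS_small[of x] ab bd by simp
    then show "x \<in> {a}" using \<open>x \<le> a\<close> ab by auto
  next
    assume "x \<in> {a}" then show "x \<in> AA d a b a" using a_SS by (simp add: AA_def)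
  qed
qed

lemma AA_b: "AA d a b b = {a, b}"
proof (rule set_eqI)
  fix x
  show "x \<in> AA d a b b \<longleftrightarrow> x \<in> {a, b}"
  proof
    assume x: "x \<in> AA d a b b"
    then have "x \<in> SS d a b" "x \<le> b" by (auto simp: AA_def)
    moreover have "0 < x" using \<open>x \<in> SS d a b\<close> by (rule SS_pos)
    ultimately have "x = a \<or> x = b" using SS_small[of x] ab bd by simp
    then show "x \<in> {a, b}" by auto
  next
    assume "x \<in> {a, b}" then show "x \<in> AA d a b b" using a_SS b_SS ab by (auto simp: AA_def)
  qed
qed

lemma AA_big:
  assumes m: "d < m"
  shows "card (AA d a b m) = card (AA d a b (m - d)) + 2"
proof -
  have eq: "AA d a b m = {a, b} \<union> (\<lambda>k. k + d) ` AA d a b (m - d)"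
  proof
    show "AA d a b m \<subseteq> {a, b} \<union> (\<lambda>k. k + d) ` AA d a b (m - d)"
    proof
      fix k assume k: "k \<in> AA d a b m"
      show "k \<in> {a, b} \<union> (\<lambda>k. k + d) ` AA d a b (m - d)"
      proof (cases "k \<le> d")
        case True
        then show ?thesis using k SS_small unfolding AA_def SS_def by auto
      next
        case False
        then have "k - d \<in> AA d a b (m - d)" using k SS_shift unfolding AA_def by auto
        moreover have "k = (k - d) + d" using False by simp
        ultimately show ?thesis by blast
      qed
    qed
    show "{a, b} \<union> (\<lambda>k. k + d) ` AA d a b (m - d) \<subseteq> AA d a b m"
    proof
      fix k assume "k \<in> {a, b} \<union> (\<lambda>k. k + d) ` AA d a b (m - d)"
      then consider "k = a" | "k = b" | k' where "k' \<in> AA d a b (m - d)" "k = k' + d" by blast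
      then show "k \<in> AA d a b m"
      proof cases
        case 1 then show ?thesis using a_SS m ab bd unfolding AA_def by auto
      next
        case 2 then show ?thesis using b_SS m ab bd unfolding AA_def by auto
      next
        case 3
        then have "k' \<in> SS d a b" "k' \<le> m - d" "0 < k'" unfolding AA_def SS_def by auto
        then show ?thesis using 3 SS_shift[of k] unfolding AA_def by auto
      qed
    qed
  qed
  have disj: "{a, b} \<inter> (\<lambda>k. k + d) ` AA d a b (m - d) = {}"
    using ab bd by (auto simp: AA_def SS_def)
  have "card (AA d a b m) = card {a, b} + card ((\<lambda>k. k + d) ` AA d a b (m - d))"
    unfolding eq by (rule card_Un_disjoint) (use disj in auto)
  also have "card ((\<lambda>k. k + d) ` AA d a b (m - d)) = card (AA d a b (m - d))"
    by (rule card_image) (auto simp: inj_on_def)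
  finally show ?thesis using ab by simp
qed

lemma AA_pos: "m \<in> SS d a b \<Longrightarrow> 1 \<le> card (AA d a b m)"
proof -
  assume "m \<in> SS d a b"
  then have "m \<in> AA d a b m" by (simp add: AA_def)
  then show ?thesis using finite_AA[of d a b m] by (metis One_nat_def Suc_leI card_gt_0_iff empty_iff)
qed

end


lemma binom_rec:
  "real ((i + k + 2) choose k) - 2 * (if 1 \<le> k then real ((i + k + 1) choose (k - 1)) else 0)
    + (if 2 \<le> k then real ((i + k) choose (k - 2)) else 0) = real ((i + k) choose k)"
proof (cases k)
  case 0 then show ?thesis by simp
next
  case (Suc k1)
  show ?thesis
  proof (cases k1)
    case 0 then show ?thesis using Suc by simp
  next
    case (Suc j)
    have e1: "i + k + 2 = Suc (Suc (Suc (Suc (i + j))))" "k = Suc (Suc j)" using Suc \<open>k = Suc k1\<close> by simp_all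
    have e2: "i + k + 1 = Suc (Suc (Suc (i + j)))" "i + k = Suc (Suc (i + j))" using e1 by simp_all
    have "real (Suc (Suc (Suc (Suc (i + j)))) choose Suc (Suc j)) =
          real (Suc (Suc (Suc (i + j))) choose Suc j) + real (Suc (Suc (Suc (i + j))) choose Suc (Suc j))"
      by (simp only: binomial_Suc_Suc of_nat_add)
    moreover have "real (Suc (Suc (Suc (i + j))) choose Suc (Suc j)) =
          real (Suc (Suc (i + j)) choose Suc j) + real (Suc (Suc (i + j)) choose Suc (Suc j))"
      by (simp only: binomial_Suc_Suc of_nat_add)
    moreover have "real (Suc (Suc (Suc (i + j))) choose Suc j) =
          real (Suc (Suc (i + j)) choose j) + real (Suc (Suc (i + j)) choose Suc j)"
      by (simp only: binomial_Suc_Suc of_nat_add)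
    ultimately show ?thesis unfolding e1 e2 by simp
  qed
qed

context
  fixes d a b :: nat
  assumes d2: "2 \<le> d" and a0: "0 < a" and ab: "a < b" and bd: "b \<le> d"
begin

lemma ell3_real: "real (ell3 d a b m l n) = (if 0 < l \<and> n + 1 = m + l \<and> m \<in> SS d a b
            then real ((card (AA d a b m) + l - 2) choose (l - 1)) else 0)"
proof (cases "l = 0")
  case True then show ?thesis by (simp add: ell3_l0)
next
  case False
  then have "card (AA d a b m) + (l - 1) - 1 = card (AA d a b m) + l - 2" by simp
  then show ?thesis using False ell3_formula[of l d a b m n] by simp
qed

lemma ell3_zero: "\<not> (0 < l \<and> n + 1 = m + l \<and> m \<in> SS d a b) \<Longrightarrow> ell3 d a b m l n = 0"
proof -
  assume h: "\<not> (0 < l \<and> n + 1 = m + l \<and> m \<in> SS d a b)"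
  show ?thesis
  proof (cases "l = 0")
    case True then show ?thesis by (simp add: ell3_l0)
  next
    case False
    then have hc: "\<not> (n + 1 = m + l \<and> m \<in> SS d a b)" using h by simp
    have "ell3 d a b m l n = (if n + 1 = m + l \<and> m \<in> SS d a b then (card (AA d a b m) + (l - 1) - 1) choose (l - 1) else 0)"
      using False by (intro ell3_formula) simp
    also have "\<dots> = 0" using hc by (rule if_not_P)
    finally show ?thesis .
  qed
qed

lemma zero_not_SS: "0 \<notin> SS d a b" by (simp add: SS_def)

lemma ell3_rec:
  "real (ell3 d a b m l n)
   - 2 * (if 1 \<le> n \<and> 1 \<le> l then real (ell3 d a b m (l-1) (n-1)) else 0)
   + (if 2 \<le> n \<and> 2 \<le> l then real (ell3 d a b m (l-2) (n-2)) else 0)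
   - (if d \<le> n \<and> d \<le> m then real (ell3 d a b (m-d) l (n-d)) else 0)
   = (if n = a \<and> l = 1 \<and> m = a then 1 else 0) - (if n = a+1 \<and> l = 2 \<and> m = a then 1 else 0)
     + (if n = b \<and> l = 1 \<and> m = b then 1 else 0)"
proof (cases "0 < l \<and> n + 1 = m + l")
  case False
  have "ell3 d a b m l n = 0" by (rule ell3_zero) (use False in auto)
  then have t0: "real (ell3 d a b m l n) = 0" by simp
  have t1: "(if 1 \<le> n \<and> 1 \<le> l then real (ell3 d a b m (l-1) (n-1)) else 0) = 0"
  proof (cases "1 \<le> n \<and> 1 \<le> l")
    case True
    then have "\<not> (0 < l - 1 \<and> (n - 1) + 1 = m + (l - 1) \<and> m \<in> SS d a b)" using False by auto
    from ell3_zero[OF this] show ?thesis using True by simp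
  next
    case False then show ?thesis by (rule if_not_P)
  qed
  have t2: "(if 2 \<le> n \<and> 2 \<le> l then real (ell3 d a b m (l-2) (n-2)) else 0) = 0"
  proof (cases "2 \<le> n \<and> 2 \<le> l")
    case True
    then have "\<not> (0 < l - 2 \<and> (n - 2) + 1 = m + (l - 2) \<and> m \<in> SS d a b)" using False by auto
    from ell3_zero[OF this] show ?thesis using True by simp
  next
    case False then show ?thesis by (rule if_not_P)
  qed
  have t3: "(if d \<le> n \<and> d \<le> m then real (ell3 d a b (m-d) l (n-d)) else 0) = 0"
  proof (cases "d \<le> n \<and> d \<le> m")
    case True
    then have "\<not> (0 < l \<and> (n - d) + 1 = (m - d) + l \<and> m - d \<in> SS d a b)" using False by auto
    from ell3_zero[OF this] show ?thesis using True by simp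
  next
    case False then show ?thesis by (rule if_not_P)
  qed
  have r1: "\<not> (n = a \<and> l = 1 \<and> m = a)" "\<not> (n = a+1 \<and> l = 2 \<and> m = a)" "\<not> (n = b \<and> l = 1 \<and> m = b)"
    using False by auto
  show ?thesis unfolding t0 t1 t2 t3 using r1 by simp
next
  case True
  then have l: "0 < l" and nml: "n + 1 = m + l" by auto
  show ?thesis
  proof (cases "m \<in> SS d a b")
    case False
    have "m \<noteq> a" "m \<noteq> b" using False a_SS[OF d2 a0 ab bd] b_SS[OF d2 a0 ab bd] by auto
    moreover have "d \<le> m \<Longrightarrow> m - d \<notin> SS d a b"
      using False SS_shift[OF d2 a0 ab bd, of m] zero_not_SS by (cases "d = m") auto
    ultimately show ?thesis using False by (auto simp: ell3_real)
  next
    case mS: True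
    show ?thesis
    proof (cases "m \<le> d")
      case True
      have "0 < m" using mS by (simp add: SS_def)
      then have "m = a \<or> m = b" using SS_small[OF d2 a0 ab bd, of m] True mS by simp
      then show ?thesis
      proof
        assume ma: "m = a"
        have c: "card (AA d a b m) = 1" using ma AA_a[OF d2 a0 ab bd] by simp
        have nd: "\<not> (d \<le> m)" using ma ab bd by simp
        obtain k where k: "l = Suc k" using l by (metis gr0_implies_Suc)
        show ?thesis
        proof (cases k)
          case 0 then show ?thesis using k nml ma mS c nd ab by (simp add: ell3_real)
        next
          case (Suc k1)
          show ?thesis
          proof (cases k1)
            case 0 then show ?thesis using k Suc nml ma mS c nd ab by (simp add: ell3_real)
          next
            case (Suc j)
            then have lj: "l = Suc (Suc (Suc j))" using k \<open>k = Suc k1\<close> by simp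
            then show ?thesis using nml ma mS c nd ab by (simp add: ell3_real)
          qed
        qed
      next
        assume mb: "m = b"
        have c: "card (AA d a b m) = 2" using mb AA_b[OF d2 a0 ab bd] ab by simp
        have t3: "(if d \<le> n \<and> d \<le> m then real (ell3 d a b (m-d) l (n-d)) else 0) = 0"
        proof (cases "d \<le> n \<and> d \<le> m")
          case True
          then have "m - d = 0" using \<open>m \<le> d\<close> by simp
          then have "\<not> (0 < l \<and> (n - d) + 1 = (m - d) + l \<and> m - d \<in> SS d a b)" using zero_not_SS by simp
          from ell3_zero[OF this] show ?thesis using True by simp
        next
          case False then show ?thesis by (rule if_not_P)
        qed
        obtain k where k: "l = Suc k" using l by (metis gr0_implies_Suc)
        have z: "\<And>l' n'. ell3 d a b 0 l' n' = 0" using zero_not_SS by (intro ell3_zero) simp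
        have dm: "d \<le> b \<Longrightarrow> b - d \<notin> SS d a b" using \<open>m \<le> d\<close> mb zero_not_SS by simp
        show ?thesis
        proof (cases k)
          case 0 then show ?thesis using k nml mb mS c ab z dm by (simp add: ell3_real)
        next
          case (Suc k1)
          show ?thesis
          proof (cases k1)
            case 0 then show ?thesis using k Suc nml mb mS c ab z dm by (simp add: ell3_real)
          next
            case (Suc j)
            then have lj: "l = Suc (Suc (Suc j))" using k \<open>k = Suc k1\<close> by simp
            then show ?thesis using nml mb mS c ab z dm by (simp add: ell3_real)
          qed
        qed
      qed
    next
      case False
      then have md: "d < m" by simp
      have mdS: "m - d \<in> SS d a b" using SS_shift[OF d2 a0 ab bd md] mS by simp
      have c: "card (AA d a b m) = card (AA d a b (m - d)) + 2" by (rule AA_big[OF d2 a0 ab bd md])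
      have c1: "1 \<le> card (AA d a b (m - d))" by (rule AA_pos[OF d2 a0 ab bd mdS])
      obtain i where i: "card (AA d a b (m - d)) = i + 1" using c1 by (metis le_add_diff_inverse2)
      obtain k where k: "l = k + 1" using l by (metis Suc_eq_plus1 gr0_implies_Suc)
      have nd: "d \<le> n" using nml md by simp
      have mab: "m \<noteq> a" "m \<noteq> b" using md ab bd by auto
      have e: "real (ell3 d a b m l n) = real ((i + k + 2) choose k)"
        using mS nml c i k by (simp add: ell3_real)
      have e1: "(if 1 \<le> n \<and> 1 \<le> l then real (ell3 d a b m (l-1) (n-1)) else 0)
              = (if 1 \<le> k then real ((i + k + 1) choose (k - 1)) else 0)"
        using mS nml c i k by (simp add: ell3_real)
      have e2: "(if 2 \<le> n \<and> 2 \<le> l then real (ell3 d a b m (l-2) (n-2)) else 0)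
              = (if 2 \<le> k then real ((i + k) choose (k - 2)) else 0)"
        using mS nml c i k by (auto simp: ell3_real numeral_2_eq_2)
      have e3: "(if d \<le> n \<and> d \<le> m then real (ell3 d a b (m-d) l (n-d)) else 0)
              = real ((i + k) choose k)"
        using mdS nml i k nd md by (simp add: ell3_real)
      show ?thesis unfolding e e1 e2 e3 using binom_rec[of i k] mab by simp
    qed
  qed
qed

end



definition mon :: "nat \<Rightarrow> nat \<Rightarrow> nat \<Rightarrow> real fps fps fps" where
  "mon i j k = fps_const (fps_const (fps_X ^ i) * fps_X ^ j) * fps_X ^ k"

lemma mon_mult_nth:
  "(mon i j k * T) $ n $ l $ m = (if k \<le> n \<and> j \<le> l \<and> i \<le> m then T $ (n-k) $ (l-j) $ (m-i) else 0)"
proof -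
  have "mon i j k * T = fps_const (fps_const (fps_X ^ i) * fps_X ^ j) * (fps_X ^ k * T)"
    unfolding mon_def by (simp only: mult.assoc)
  then have "(mon i j k * T) $ n = (fps_const (fps_X ^ i) * fps_X ^ j) * (if n < k then 0 else T $ (n - k))"
    by (simp only: fps_mult_left_const_nth fps_X_power_mult_nth)
  also have "\<dots> = fps_const (fps_X ^ i) * (fps_X ^ j * (if n < k then 0 else T $ (n - k)))"
    by (simp only: mult.assoc)
  finally have "(mon i j k * T) $ n $ l = fps_X ^ i * (if l < j then 0 else (if n < k then 0 else T $ (n - k)) $ (l - j))"
    by (simp only: fps_mult_left_const_nth fps_X_power_mult_nth)
  then have "(mon i j k * T) $ n $ l $ m = (if m < i then 0 else (if l < j then 0 else (if n < k then 0 else T $ (n - k)) $ (l - j)) $ (m - i))"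
    by (simp only: fps_X_power_mult_nth)
  then show ?thesis by auto
qed

lemma mon_nth: "(mon i j k) $ n $ l $ m = (if n = k \<and> l = j \<and> m = i then 1 else 0)"
  using mon_mult_nth[of i j k 1 n l m] by auto

lemma mon_0: "0 < k \<Longrightarrow> (mon i j k) $ 0 = 0"
  by (intro fps_ext) (simp add: mon_nth)

lemma mon_mult: "mon i j k * mon i' j' k' = mon (i + i') (j + j') (k + k')"
proof -
  have "mon i j k * mon i' j' k' =
     (fps_const (fps_const (fps_X ^ i) * fps_X ^ j) * fps_const (fps_const (fps_X ^ i') * fps_X ^ j')) * (fps_X ^ k * fps_X ^ k')"
    unfolding mon_def by (simp only: mult.assoc mult.commute mult.left_commute)
  also have "\<dots> = fps_const ((fps_const (fps_X ^ i) * fps_X ^ j) * (fps_const (fps_X ^ i') * fps_X ^ j')) * fps_X ^ (k + k')"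
    by (simp only: fps_const_mult power_add)
  also have "(fps_const (fps_X ^ i) * fps_X ^ j) * (fps_const (fps_X ^ i') * fps_X ^ j') =
      (fps_const (fps_X ^ i) * fps_const (fps_X ^ i')) * (fps_X ^ j * fps_X ^ j' :: real fps fps)"
    by (simp only: mult.assoc mult.commute mult.left_commute)
  also have "\<dots> = fps_const (fps_X ^ (i + i')) * fps_X ^ (j + j')"
    by (simp only: fps_const_mult power_add)
  finally show ?thesis unfolding mon_def .
qed

lemma mon_one: "mon 0 0 0 = 1"
  unfolding mon_def by simp

lemma mon_power: "mon i j k ^ n = mon (n * i) (n * j) (n * k)"
  by (induction n) (simp_all add: mon_one mon_mult)

lemma fq_mono: "fq = mon 0 0 1" unfolding fq_def mon_def by simp
lemma fy_mono: "fy = mon 0 1 0" unfolding fy_def mon_def by simp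
lemma fx_mono: "fx = mon 1 0 0" unfolding fx_def mon_def by simp

lemma numer: "fy * (fx ^ a * fq ^ a - fx ^ a * fy * fq ^ (a + 1) + fx ^ b * fq ^ b)
     = mon a 1 a - mon a 2 (a+1) + mon b 1 b"
  unfolding fx_mono fy_mono fq_mono mon_power
  by (simp add: distrib_left right_diff_distrib mon_mult numeral_2_eq_2)

lemma denom: "(1 - 2 * fy * fq + fy ^ 2 * fq ^ 2 - fx ^ d * fq ^ d)
     = 1 - mon 0 1 1 - mon 0 1 1 + mon 0 2 2 - mon d 0 d"
proof -
  have e0: "fy * fq = mon 0 1 1" by (simp add: fy_mono fq_mono mon_mult)
  have e1: "2 * fy * fq = mon 0 1 1 + mon 0 1 1"
    by (simp only: mult_2 distrib_right e0)
  have e2: "fy ^ 2 * fq ^ 2 = mon 0 2 2" by (simp add: fy_mono fq_mono mon_mult mon_power numeral_2_eq_2)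
  have e3: "fx ^ d * fq ^ d = mon d 0 d" by (simp add: fx_mono fq_mono mon_mult mon_power)
  show ?thesis by (simp only: e1 e2 e3 diff_diff_eq)
qed

lemma inverse_one_fpsfps: "inverse (1 :: real fps fps) = 1"
  by (rule fps_inverse_one') simp

lemma right_inv:
  fixes D :: "real fps fps fps"
  assumes "D $ 0 = 1"
  shows "D * inverse D = 1"
proof -
  have "inverse D = fps_right_inverse D (inverse (D $ 0))" by (simp add: fps_inverse_def)
  also have "\<dots> = fps_right_inverse D 1" using assms inverse_one_fpsfps by simp
  finally show ?thesis using fps_right_inverse[of D 1] assms by simp
qed



context
  fixes d a b :: nat
  assumes d2: "2 \<le> d" and a0: "0 < a" and ab: "a < b" and bd: "b \<le> d"
begin

lemma G_nth: "trivar (\<lambda>al la n. real (ell3 d a b al la n)) $ n $ l $ m = real (ell3 d a b m l n)"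
proof (cases "1 \<le> m \<and> 1 \<le> l \<and> 1 \<le> n")
  case True then show ?thesis by (simp add: trivar_def)
next
  case False
  have "\<not> (0 < l \<and> n + 1 = m + l \<and> m \<in> SS d a b)"
  proof (cases "m = 0")
    case True then show ?thesis using zero_not_SS[OF d2 a0 ab bd] by simp
  next
    case False then show ?thesis using \<open>\<not> (1 \<le> m \<and> 1 \<le> l \<and> 1 \<le> n)\<close> by auto
  qed
  from ell3_zero[OF d2 a0 ab bd this] show ?thesis using False by (simp add: trivar_def)
qed

lemma main_tri:
  "trivar (\<lambda>al la n. real (ell3 d a b al la n)) =
     (fy * (fx ^ a * fq ^ a - fx ^ a * fy * fq ^ (a + 1) + fx ^ b * fq ^ b))
     * inverse (1 - 2 * fy * fq + fy ^ 2 * fq ^ 2 - fx ^ d * fq ^ d)"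
proof -
  define G where "G = trivar (\<lambda>al la n. real (ell3 d a b al la n))"
  define D where "D = 1 - mon 0 1 1 - mon 0 1 1 + mon 0 2 2 - mon d 0 d"
  define N where "N = mon a 1 a - mon a 2 (a+1) + mon b 1 b"
  have GD_exp: "G * D = G - mon 0 1 1 * G - mon 0 1 1 * G + mon 0 2 2 * G - mon d 0 d * G"
    unfolding D_def by (simp add: algebra_simps)
  have GD: "G * D = N"
  proof (rule fps_ext)
    fix n
    show "(G * D) $ n = N $ n"
    proof (rule fps_ext)
      fix l
      show "(G * D) $ n $ l = N $ n $ l"
      proof (rule fps_ext)
        fix m
        have c0: "G $ n $ l $ m = real (ell3 d a b m l n)" by (simp add: G_def G_nth)
        have c1: "(mon 0 1 1 * G) $ n $ l $ m = (if 1 \<le> n \<and> 1 \<le> l then real (ell3 d a b m (l-1) (n-1)) else 0)"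
          by (simp add: mon_mult_nth G_def G_nth)
        have c2: "(mon 0 2 2 * G) $ n $ l $ m = (if 2 \<le> n \<and> 2 \<le> l then real (ell3 d a b m (l-2) (n-2)) else 0)"
          by (simp add: mon_mult_nth G_def G_nth)
        have c3: "(mon d 0 d * G) $ n $ l $ m = (if d \<le> n \<and> d \<le> m then real (ell3 d a b (m-d) l (n-d)) else 0)"
          by (simp add: mon_mult_nth G_def G_nth)
        have "(G * D) $ n $ l $ m = G $ n $ l $ m - (mon 0 1 1 * G) $ n $ l $ m - (mon 0 1 1 * G) $ n $ l $ m
            + (mon 0 2 2 * G) $ n $ l $ m - (mon d 0 d * G) $ n $ l $ m"
          by (simp only: GD_exp fps_sub_nth fps_add_nth)
        also have "\<dots> = real (ell3 d a b m l n)
           - (if 1 \<le> n \<and> 1 \<le> l then real (ell3 d a b m (l-1) (n-1)) else 0)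
           - (if 1 \<le> n \<and> 1 \<le> l then real (ell3 d a b m (l-1) (n-1)) else 0)
           + (if 2 \<le> n \<and> 2 \<le> l then real (ell3 d a b m (l-2) (n-2)) else 0)
           - (if d \<le> n \<and> d \<le> m then real (ell3 d a b (m-d) l (n-d)) else 0)"
          by (simp only: c0 c1 c2 c3)
        also have "\<dots> = (if n = a \<and> l = 1 \<and> m = a then 1 else 0) - (if n = a+1 \<and> l = 2 \<and> m = a then 1 else 0)
           + (if n = b \<and> l = 1 \<and> m = b then 1 else 0)"
          using ell3_rec[OF d2 a0 ab bd, of m l n] by linarith
        also have "\<dots> = N $ n $ l $ m" unfolding N_def by (simp add: mon_nth)
        finally show "(G * D) $ n $ l $ m = N $ n $ l $ m" .
      qed
    qed
  qed
  have D0: "D $ 0 = 1" unfolding D_def using d2 by (simp add: mon_0)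
  have "G = G * (D * inverse D)" using right_inv[OF D0] by simp
  also have "\<dots> = N * inverse D" using GD by (simp add: mult.assoc[symmetric])
  finally have GN: "G = N * inverse D" .
  show ?thesis unfolding numer denom using GN unfolding G_def N_def D_def .
qed

end



lemma sorted_le_hd: "sorted_wrt (\<ge>) p \<Longrightarrow> x \<in> set p \<Longrightarrow> x \<le> hd (p :: nat list)"
  by (cases p) auto

lemma ind_sum: "(\<Sum>l\<le>(n::nat). (if l = y then c else 0 :: real)) = (if y \<le> n then c else 0)"
  by (induction n) (auto simp: le_Suc_eq)

lemma shift_sum0: "(\<Sum>l\<le>j + (s::nat). (if s \<le> l then g (l - s) else 0 :: real)) = (\<Sum>l\<le>j. g l)"
proof (induction j)
  case 0
  have "(\<Sum>l\<le>s. (if s \<le> l then g (l - s) else 0 :: real)) = (\<Sum>l\<le>s. (if l = s then g 0 else 0 :: real))"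
    by (rule sum.cong) auto
  then show ?case by (simp add: ind_sum)
next
  case (Suc j)
  then show ?case by simp
qed

lemma shift_sum: "(s::nat) \<le> K \<Longrightarrow> (\<Sum>l\<le>K. (if s \<le> l then g (l - s) else 0 :: real)) = (\<Sum>l\<le>K - s. g l)"
  using shift_sum0[where j="K - s" and s=s and g=g] by simp

lemma delta_sum2: "(\<Sum>m\<le>(n::nat). \<Sum>l\<le>n. (if n = x \<and> l = y \<and> m = z then 1 else 0 :: real))
   = (if n = x \<and> y \<le> n \<and> z \<le> n then 1 else 0)"
proof -
  have "\<And>m. (\<Sum>l\<le>n. (if n = x \<and> l = y \<and> m = z then 1 else 0 :: real))
     = (if m = z then (if n = x \<and> y \<le> n then 1 else 0) else 0)"
  proof -
    fix m
    have "(\<Sum>l\<le>n. (if n = x \<and> l = y \<and> m = z then 1 else 0 :: real))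
       = (\<Sum>l\<le>n. (if l = y then (if n = x \<and> m = z then 1 else 0) else 0 :: real))"
      by (rule sum.cong) auto
    also have "\<dots> = (if y \<le> n then (if n = x \<and> m = z then 1 else 0) else 0)" by (rule ind_sum)
    finally show "(\<Sum>l\<le>n. (if n = x \<and> l = y \<and> m = z then 1 else 0 :: real))
     = (if m = z then (if n = x \<and> y \<le> n then 1 else 0) else 0)" by auto
  qed
  then have "(\<Sum>m\<le>n. \<Sum>l\<le>n. (if n = x \<and> l = y \<and> m = z then 1 else 0 :: real))
     = (\<Sum>m\<le>n. (if m = z then (if n = x \<and> y \<le> n then 1 else 0) else 0 :: real))" by simp
  also have "\<dots> = (if z \<le> n then (if n = x \<and> y \<le> n then 1 else 0) else 0)" by (rule ind_sum)
  finally show ?thesis by auto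
qed

context
  fixes d a b :: nat
  assumes d2: "2 \<le> d" and a0: "0 < a" and ab: "a < b" and bd: "b \<le> d"
begin

definition BB :: "nat \<Rightarrow> real" where
  "BB n = (\<Sum>m\<le>n. \<Sum>l\<le>n. real (ell3 d a b m l n))"

lemma ell3_support: "ell3 d a b m l n \<noteq> 0 \<Longrightarrow> m \<le> n \<and> l \<le> n"
proof -
  assume h: "ell3 d a b m l n \<noteq> 0"
  have "0 < l \<and> n + 1 = m + l \<and> m \<in> SS d a b"
    using ell3_zero[OF d2 a0 ab bd, of l n m] h by blast
  then have "0 < m" "0 < l" "n + 1 = m + l" by (auto simp: SS_def)
  then show ?thesis by simp
qed

lemma box_sum: "n \<le> K1 \<Longrightarrow> n \<le> K2 \<Longrightarrow> (\<Sum>m\<le>K1. \<Sum>l\<le>K2. real (ell3 d a b m l n)) = BB n"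
proof -
  assume K: "n \<le> K1" "n \<le> K2"
  have inner: "\<And>m. (\<Sum>l\<le>K2. real (ell3 d a b m l n)) = (\<Sum>l\<le>n. real (ell3 d a b m l n))"
    by (rule sum.mono_neutral_right) (use K ell3_support in auto)
  have "(\<Sum>m\<le>K1. \<Sum>l\<le>n. real (ell3 d a b m l n)) = (\<Sum>m\<le>n. \<Sum>l\<le>n. real (ell3 d a b m l n))"
  proof (rule sum.mono_neutral_right[OF finite_atMost])
    show "{..n} \<subseteq> {..K1}" using K by auto
    show "\<forall>i\<in>{..K1} - {..n}. (\<Sum>l\<le>n. real (ell3 d a b i l n)) = 0"
    proof
      fix i assume i: "i \<in> {..K1} - {..n}"
      have "\<And>l. ell3 d a b i l n = 0"
      proof (rule ccontr)
        fix l assume "ell3 d a b i l n \<noteq> 0"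
        from ell3_support[OF this] i show False by auto
      qed
      then show "(\<Sum>l\<le>n. real (ell3 d a b i l n)) = 0" by simp
    qed
  qed
  then show ?thesis unfolding BB_def inner .
qed

lemma BB_rec:
  "BB n - 2 * (if 1 \<le> n then BB (n - 1) else 0) + (if 2 \<le> n then BB (n - 2) else 0)
     - (if d \<le> n then BB (n - d) else 0)
   = (if n = a then 1 else 0) - (if n = a + 1 then 1 else 0) + (if n = b then 1 else 0)"
proof -
  let ?E = "\<lambda>m l n. real (ell3 d a b m l n)"
  have s1: "(\<Sum>m\<le>n. \<Sum>l\<le>n. (if 1 \<le> n \<and> 1 \<le> l then ?E m (l-1) (n-1) else 0))
        = (if 1 \<le> n then BB (n - 1) else 0)"
  proof (cases "1 \<le> n")
    case True
    have "\<And>m. (\<Sum>l\<le>n. (if 1 \<le> n \<and> 1 \<le> l then ?E m (l-1) (n-1) else 0)) = (\<Sum>l\<le>n - 1. ?E m l (n-1))"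
      using True shift_sum[of 1 n "\<lambda>l. real (ell3 d a b m l (n-1))" for m] by simp
    then have "(\<Sum>m\<le>n. \<Sum>l\<le>n. (if 1 \<le> n \<and> 1 \<le> l then ?E m (l-1) (n-1) else 0))
       = (\<Sum>m\<le>n. \<Sum>l\<le>n - 1. ?E m l (n-1))" by simp
    also have "\<dots> = BB (n - 1)" by (rule box_sum) auto
    finally show ?thesis using True by simp
  qed simp
  have s2: "(\<Sum>m\<le>n. \<Sum>l\<le>n. (if 2 \<le> n \<and> 2 \<le> l then ?E m (l-2) (n-2) else 0))
        = (if 2 \<le> n then BB (n - 2) else 0)"
  proof (cases "2 \<le> n")
    case True
    have "\<And>m. (\<Sum>l\<le>n. (if 2 \<le> n \<and> 2 \<le> l then ?E m (l-2) (n-2) else 0)) = (\<Sum>l\<le>n - 2. ?E m l (n-2))"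
      using True shift_sum[of 2 n "\<lambda>l. real (ell3 d a b m l (n-2))" for m] by simp
    then have "(\<Sum>m\<le>n. \<Sum>l\<le>n. (if 2 \<le> n \<and> 2 \<le> l then ?E m (l-2) (n-2) else 0))
       = (\<Sum>m\<le>n. \<Sum>l\<le>n - 2. ?E m l (n-2))" by simp
    also have "\<dots> = BB (n - 2)" by (rule box_sum) auto
    finally show ?thesis using True by simp
  qed simp
  have s3: "(\<Sum>m\<le>n. \<Sum>l\<le>n. (if d \<le> n \<and> d \<le> m then ?E (m-d) l (n-d) else 0))
        = (if d \<le> n then BB (n - d) else 0)"
  proof (cases "d \<le> n")
    case True
    have "\<And>m. (\<Sum>l\<le>n. (if d \<le> n \<and> d \<le> m then ?E (m-d) l (n-d) else 0))
        = (if d \<le> m then (\<Sum>l\<le>n. ?E (m-d) l (n-d)) else 0)"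
      using True by simp
    then have "(\<Sum>m\<le>n. \<Sum>l\<le>n. (if d \<le> n \<and> d \<le> m then ?E (m-d) l (n-d) else 0))
       = (\<Sum>m\<le>n. (if d \<le> m then (\<Sum>l\<le>n. ?E (m-d) l (n-d)) else 0))" by simp
    also have "\<dots> = (\<Sum>m\<le>n - d. \<Sum>l\<le>n. ?E m l (n-d))"
      by (rule shift_sum) (rule True)
    also have "\<dots> = BB (n - d)" by (rule box_sum) auto
    finally show ?thesis using True by simp
  qed simp
  have s0: "(\<Sum>m\<le>n. \<Sum>l\<le>n. ?E m l n) = BB n" by (simp add: BB_def)
  have "(\<Sum>m\<le>n. \<Sum>l\<le>n. ?E m l n
   - 2 * (if 1 \<le> n \<and> 1 \<le> l then ?E m (l-1) (n-1) else 0)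
   + (if 2 \<le> n \<and> 2 \<le> l then ?E m (l-2) (n-2) else 0)
   - (if d \<le> n \<and> d \<le> m then ?E (m-d) l (n-d) else 0))
   = (\<Sum>m\<le>n. \<Sum>l\<le>n. (if n = a \<and> l = 1 \<and> m = a then 1 else 0) - (if n = a+1 \<and> l = 2 \<and> m = a then 1 else 0)
     + (if n = b \<and> l = 1 \<and> m = b then 1 else 0))"
    using ell3_rec[OF d2 a0 ab bd] by simp
  then have "BB n - 2 * (if 1 \<le> n then BB (n - 1) else 0) + (if 2 \<le> n then BB (n - 2) else 0)
     - (if d \<le> n then BB (n - d) else 0)
     = (if n = a \<and> 1 \<le> n \<and> a \<le> n then 1 else 0) - (if n = a + 1 \<and> 2 \<le> n \<and> a \<le> n then 1 else 0)
       + (if n = b \<and> 1 \<le> n \<and> b \<le> n then 1 else 0)"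
    unfolding s0[symmetric] s1[symmetric] s2[symmetric] s3[symmetric]
      delta_sum2[symmetric]
    by (simp add: sum.distrib sum_subtractf sum_distrib_left)
  moreover have "(if n = a \<and> 1 \<le> n \<and> a \<le> n then 1 else 0) = (if n = a then 1 else (0::real))"
    using a0 by auto
  moreover have "(if n = a + 1 \<and> 2 \<le> n \<and> a \<le> n then 1 else 0) = (if n = a + 1 then 1 else (0::real))"
    using a0 by auto
  moreover have "(if n = b \<and> 1 \<le> n \<and> b \<le> n then 1 else 0) = (if n = b then 1 else (0::real))"
    using a0 ab by auto
  ultimately show ?thesis by simp
qed

lemma ell_sum: "1 \<le> n \<Longrightarrow> ell d a b n = (\<Sum>m\<le>n. \<Sum>l\<le>n. ell3 d a b m l n)"
proof -
  assume n: "1 \<le> n"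
  let ?A = "\<lambda>m l. {p. is_partition p \<and> parts_ab_mod d a b p \<and>
      largest_part p = m \<and> num_parts p = l \<and> perimeter p = n}"
  have eq: "{p. is_partition p \<and> parts_ab_mod d a b p \<and> perimeter p = n} = (\<Union>m\<in>{..n}. \<Union>l\<in>{..n}. ?A m l)"
  proof
    show "{p. is_partition p \<and> parts_ab_mod d a b p \<and> perimeter p = n} \<subseteq> (\<Union>m\<in>{..n}. \<Union>l\<in>{..n}. ?A m l)"
    proof
      fix p assume p: "p \<in> {p. is_partition p \<and> parts_ab_mod d a b p \<and> perimeter p = n}"
      then have "p \<noteq> []" "\<forall>k\<in>set p. 0 < k" by (auto simp: is_partition_def)
      then have h0: "0 < hd p" "0 < length p" by auto
      have "n = hd p + length p - 1" using p by (simp add: perimeter_def largest_part_def num_parts_def)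
      then have "hd p \<le> n" "length p \<le> n" using h0 by linarith+
      then show "p \<in> (\<Union>m\<in>{..n}. \<Union>l\<in>{..n}. ?A m l)" using p by (auto simp: largest_part_def num_parts_def)
    qed
  qed auto
  have fin: "\<And>m l. finite (?A m l)"
  proof -
    fix m l
    have "?A m l \<subseteq> {xs. set xs \<subseteq> {..m} \<and> length xs = l}"
      by (auto simp: is_partition_def largest_part_def num_parts_def dest: sorted_le_hd)
    moreover have "finite {xs. set xs \<subseteq> {..m::nat} \<and> length xs = l}" by (rule finite_lists_length_eq) simp
    ultimately show "finite (?A m l)" by (rule finite_subset)
  qed
  have "card (\<Union>m\<in>{..n}. \<Union>l\<in>{..n}. ?A m l) = (\<Sum>m\<le>n. card (\<Union>l\<in>{..n}. ?A m l))"
    by (rule card_UN_disjoint) (auto intro: fin)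
  also have "\<dots> = (\<Sum>m\<le>n. \<Sum>l\<le>n. card (?A m l))"
    by (rule sum.cong[OF refl], rule card_UN_disjoint) (auto intro: fin)
  finally show ?thesis unfolding ell_def ell3_def eq .
qed

lemma main_uni:
  "Abs_fps (\<lambda>n. if 1 \<le> n then real (ell d a b n) else 0) =
     (fps_X ^ a - fps_X ^ (a + 1) + fps_X ^ b)
     / (1 - 2 * fps_X + fps_X ^ 2 - fps_X ^ d :: real fps)"
proof -
  define F where "F = Abs_fps (\<lambda>n. if 1 \<le> n then real (ell d a b n) else 0)"
  define D where "D = (1 - 2 * fps_X + fps_X ^ 2 - fps_X ^ d :: real fps)"
  define N where "N = (fps_X ^ a - fps_X ^ (a + 1) + fps_X ^ b :: real fps)"
  have Fn: "F $ n = BB n" for n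
  proof (cases "1 \<le> n")
    case True
    then show ?thesis unfolding F_def BB_def using ell_sum[OF True] by simp
  next
    case False
    then have "n = 0" by simp
    then show ?thesis unfolding F_def BB_def using ell3_zero[OF d2 a0 ab bd, of 0 0 0] by simp
  qed
  have FD_exp: "F * D = F - fps_X * F - fps_X * F + fps_X ^ 2 * F - fps_X ^ d * F"
    unfolding D_def by (simp add: algebra_simps mult_2)
  have FD: "F * D = N"
  proof (rule fps_ext)
    fix n
    have c1: "(fps_X * F) $ n = (if 1 \<le> n then BB (n - 1) else 0)" by (simp add: Fn)
    have c2: "(fps_X ^ 2 * F) $ n = (if 2 \<le> n then BB (n - 2) else 0)" by (simp add: fps_X_power_mult_nth Fn not_less)
    have c3: "(fps_X ^ d * F) $ n = (if d \<le> n then BB (n - d) else 0)" by (simp add: fps_X_power_mult_nth Fn not_less)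
    have "(F * D) $ n = F $ n - (fps_X * F) $ n - (fps_X * F) $ n + (fps_X ^ 2 * F) $ n - (fps_X ^ d * F) $ n"
      by (simp only: FD_exp fps_sub_nth fps_add_nth)
    also have "\<dots> = BB n - (if 1 \<le> n then BB (n - 1) else 0) - (if 1 \<le> n then BB (n - 1) else 0)
       + (if 2 \<le> n then BB (n - 2) else 0) - (if d \<le> n then BB (n - d) else 0)"
      by (simp only: Fn c1 c2 c3)
    also have "\<dots> = (if n = a then 1 else 0) - (if n = a + 1 then 1 else 0) + (if n = b then 1 else 0)"
      using BB_rec[of n] by linarith
    also have "\<dots> = N $ n" unfolding N_def by (simp only: fps_sub_nth fps_add_nth fps_X_power_nth)
    finally show "(F * D) $ n = N $ n" .
  qed
  have D0: "D $ 0 \<noteq> 0" unfolding D_def using d2 by simp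
  have "F = F * (D * inverse D)" using inverse_mult_eq_1'[OF D0] by simp
  also have "\<dots> = N * inverse D" using FD by (simp add: mult.assoc[symmetric])
  also have "\<dots> = N / D" using fps_divide_unit[OF D0] by simp
  finally show ?thesis unfolding F_def N_def D_def .
qed

end

theorem mainTheorem8:
  fixes d a b :: nat
  assumes "2 \<le> d" and "0 < a" and "a < b" and "b \<le> d"
  shows "trivar (\<lambda>al la n. real (ell3 d a b al la n)) =
           (fy * (fx ^ a * fq ^ a - fx ^ a * fy * fq ^ (a + 1) + fx ^ b * fq ^ b))
           * inverse (1 - 2 * fy * fq + fy ^ 2 * fq ^ 2 - fx ^ d * fq ^ d)
    \<and> Abs_fps (\<lambda>n. if 1 \<le> n then real (ell d a b n) else 0) =
           (fps_X ^ a - fps_X ^ (a + 1) + fps_X ^ b)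
           / (1 - 2 * fps_X + fps_X ^ 2 - fps_X ^ d :: real fps)"
  using main_tri[OF assms] main_uni[OF assms] by blast

end
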